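(* Let $X$ have a pdf $f$ satisfying Conditions (A) and (B) below. Suppose the uniform quantizer $Q_{\mathrm{uni}}^\delta$ and the integer-valued Shannon code are used. Then the zero-wait sampler is asymptotically optimal: $$\lim_{\delta\to0}\Big[\mathrm{AoI}(S_{\mathrm z},Q_{\mathrm{uni}}^\delta,L')-\inf_S\mathrm{AoI}(S,Q_{\mathrm{uni}}^\delta,L')\Big]=0,$$ where the infimum is over all stationary deterministic sampling policies $S$.
   Context: Let $X$ be a real random variable with pdf $f$. Condition (A): $f$ is continuous and differentiable, and its support is a bounded interval $I$. Condition (B): $\int_I f\log_2^2 f\,dx$ and $-\int_I f\log_2 f\,dx$ exist and are finite. Quantizer and code. The uniform quantizer $Q_{\mathrm{uni}}^\delta$ partitions $I$ into consecutive cells of length $\delta$. Let $p_i$ be the probability of cell $i$. The integer-valued Shannon code assigns length $\lceil -\log_2 p_i\rceil$ to cell $i$, and $L'$ denotes the resulting random codeword length. Sampling policies. A stationary deterministic sampling policy $S$ is a measurable function $z:[0,\infty)\to[0,W]$, for some fixed $W$, with waiting time $Z=z(L')$. The zero-wait policy $S_{\mathrm z}$ has $z\equiv0$. Objective. The AoI is $\mathrm{AoI}(S,Q,L')=\frac{E[(L'+Z)^2]}{2E[L'+Z]}+E[L']$. *)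

theory Defs
  imports "HOL-Analysis.Analysis"
begin

definition num_cells :: "real \<Rightarrow> real \<Rightarrow> real \<Rightarrow> nat" where
  "num_cells a b \<delta> = nat \<lceil>(b - a) / \<delta>\<rceil>"

definition uni_cell :: "real \<Rightarrow> real \<Rightarrow> real \<Rightarrow> nat \<Rightarrow> real set" where
  "uni_cell a b \<delta> i = {a + real i * \<delta> ..< a + (real i + 1) * \<delta>} \<inter> {a..b}"

definition cell_prob :: "(real \<Rightarrow> real) \<Rightarrow> real \<Rightarrow> real \<Rightarrow> real \<Rightarrow> nat \<Rightarrow> real" where
  "cell_prob f a b \<delta> i = (LINT x : uni_cell a b \<delta> i | lborel. f x)"

definition shannon_len :: "(real \<Rightarrow> real) \<Rightarrow> real \<Rightarrow> real \<Rightarrow> real \<Rightarrow> nat \<Rightarrow> real" where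
  "shannon_len f a b \<delta> i = real_of_int \<lceil>- log 2 (cell_prob f a b \<delta> i)\<rceil>"

text \<open>Expectation of g(L') where L' takes value shannon_len i with probability cell_prob i.\<close>
definition exp_L :: "(real \<Rightarrow> real) \<Rightarrow> real \<Rightarrow> real \<Rightarrow> real \<Rightarrow> (real \<Rightarrow> real) \<Rightarrow> real" where
  "exp_L f a b \<delta> g = (\<Sum>i<num_cells a b \<delta>. cell_prob f a b \<delta> i * g (shannon_len f a b \<delta> i))"

text \<open>AoI(S, Q, L') = E[(L'+Z)^2] / (2 E[L'+Z]) + E[L'] with Z = z(L').\<close>
definition AoI :: "(real \<Rightarrow> real) \<Rightarrow> real \<Rightarrow> real \<Rightarrow> real \<Rightarrow> (real \<Rightarrow> real) \<Rightarrow> real" where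
  "AoI f a b \<delta> z =
     exp_L f a b \<delta> (\<lambda>l. (l + z l)\<^sup>2) / (2 * exp_L f a b \<delta> (\<lambda>l. l + z l))
     + exp_L f a b \<delta> (\<lambda>l. l)"

definition policies :: "real \<Rightarrow> (real \<Rightarrow> real) set" where
  "policies W = {z. z \<in> borel_measurable borel \<and> (\<forall>t\<ge>0. 0 \<le> z t \<and> z t \<le> W)}"

end

theory Submission
  imports Defs "HOL-Real_Asymp.Real_Asymp"
begin
lemma cell_sets: "uni_cell a b d i \<in> sets lborel"
  by (simp add: uni_cell_def)

lemma cell_sub: "uni_cell a b d i \<subseteq> {a..b}"
  by (auto simp: uni_cell_def)

lemma cell_disj:
  assumes "d > 0" "x \<in> uni_cell a b d i" "x \<in> uni_cell a b d j"
  shows "i = j"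
proof -
  have x: "a + real i * d \<le> x" "x < a + (real i + 1) * d" "a + real j * d \<le> x" "x < a + (real j + 1) * d"
    using assms by (auto simp: uni_cell_def)
  have "real i * d < (real j + 1) * d" "real j * d < (real i + 1) * d"
    using x by linarith+
  then have "real i < real j + 1" "real j < real i + 1"
    using assms(1) mult_less_cancel_right_pos by blast+
  then show ?thesis by linarith
qed

lemma cell_union:
  assumes "d > 0" "a < b"
  shows "{a..<b} \<subseteq> (\<Union>i<num_cells a b d. uni_cell a b d i)"
proof
  fix x assume x: "x \<in> {a..<b}"
  define i where "i = nat \<lfloor>(x - a) / d\<rfloor>"
  have q0: "0 \<le> (x - a) / d" using x assms by auto
  have "real i = of_int \<lfloor>(x - a) / d\<rfloor>" using q0 by (simp add: i_def)
  then have i1: "real i \<le> (x - a) / d" "(x - a) / d < real i + 1" by linarith+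
  have "(x - a) / d < (b - a) / d" using x assms by (simp add: divide_strict_right_mono)
  then have "\<lfloor>(x - a) / d\<rfloor> < \<lceil>(b - a) / d\<rceil>" by linarith
  then have "i < num_cells a b d" using q0 assms by (simp add: i_def num_cells_def)
  moreover have "x \<in> uni_cell a b d i"
    using i1 x assms by (auto simp: uni_cell_def field_simps)
  ultimately show "x \<in> (\<Union>i<num_cells a b d. uni_cell a b d i)" by blast
qed

lemma si_meas: "set_integrable M A (f::_\<Rightarrow>real) \<Longrightarrow> set_borel_measurable M A f"
  unfolding set_borel_measurable_def set_integrable_def by (rule borel_measurable_integrable)

lemma sum_cell_prob:
  assumes "d > 0" "a < b" "set_integrable lborel {a..b} f"
  shows "(\<Sum>i<num_cells a b d. cell_prob f a b d i) = (LINT x : {a..b} | lborel. f x)"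
proof -
  let ?U = "\<Union>i<num_cells a b d. uni_cell a b d i"
  have int: "set_integrable lborel (uni_cell a b d i) f" for i
    using set_integrable_subset[OF assms(3) cell_sets cell_sub] .
  have "(LINT x : ?U | lborel. f x) = (\<Sum>i<num_cells a b d. cell_prob f a b d i)"
    unfolding cell_prob_def
    apply (rule set_integral_finite_UN_AE)
       apply simp
      apply (rule AE_I2) using cell_disj[OF assms(1)] apply blast
    using int cell_sets by auto
  moreover have "(LINT x : ?U | lborel. f x) = (LINT x : {a..b} | lborel. f x)"
  proof (rule set_integral_cong_set)
    have m: "set_borel_measurable lborel {a..b} f"
      using assms(3) by (rule si_meas)
    show "set_borel_measurable lborel {a..b} f" by (rule m)
    have "?U \<subseteq> {a..b}" using cell_sub by blast
    have "?U \<in> sets lborel" using cell_sets by auto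
    show "set_borel_measurable lborel ?U f"
      using si_meas[OF set_integrable_subset[OF assms(3) \<open>?U \<in> sets lborel\<close> \<open>?U \<subseteq> {a..b}\<close>]] .
    show "AE x in lborel. (x \<in> {a..b}) = (x \<in> ?U)"
      using AE_lborel_singleton[of b] proof eventually_elim
      case (elim x)
      have "x \<in> {a..b} \<Longrightarrow> x \<in> {a..<b}" using elim by auto
      then show ?case using cell_union[OF assms(1,2)] \<open>?U \<subseteq> {a..b}\<close> by blast
    qed
  qed
  ultimately show ?thesis by simp
qed

lemma cell_prob_nonneg:
  assumes "\<forall>x. 0 \<le> f x"
  shows "0 \<le> cell_prob f a b d i"
  unfolding cell_prob_def set_lebesgue_integral_def using assms
  by (intro Bochner_Integration.integral_nonneg_AE AE_I2) (simp add: indicator_def)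

lemma cell_prob_le:
  assumes "d > 0" "set_integrable lborel {a..b} f" "\<forall>x\<in>{a..b}. f x \<le> M" "M \<ge> 0"
  shows "cell_prob f a b d i \<le> d * M"
proof -
  let ?C = "uni_cell a b d i"
  have sub: "?C \<subseteq> {a + real i * d .. a + (real i + 1) * d}" by (auto simp: uni_cell_def)
  have fin: "emeasure lborel ?C \<noteq> \<infinity>"
  proof -
    have "emeasure lborel ?C \<le> emeasure lborel {a + real i * d .. a + (real i + 1) * d}"
      by (rule emeasure_mono[OF sub]) simp
    also have "\<dots> = ennreal d" using assms(1) by (simp add: algebra_simps)
    finally show ?thesis using neq_top_trans[of "ennreal d"] by auto
  qed
  have ms: "measure lborel ?C \<le> d"
  proof -
    have "measure lborel ?C \<le> measure lborel {a + real i * d .. a + (real i + 1) * d}"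
      by (rule measure_mono_fmeasurable[OF sub cell_sets]) (use assms(1) in \<open>simp add: fmeasurable_def algebra_simps\<close>)
    also have "\<dots> = d" using assms(1) by (simp add: algebra_simps)
    finally show ?thesis .
  qed
  have "cell_prob f a b d i \<le> (LINT x : ?C | lborel. M)"
    unfolding cell_prob_def
    apply (rule set_integral_mono)
    using set_integrable_subset[OF assms(2) cell_sets cell_sub] apply simp
    unfolding set_integrable_def
    using integrable_mult_left[OF integrable_real_indicator[OF cell_sets, of a b d i], of M] fin apply (simp add: mult.commute less_top)
    using assms(3) cell_sub by blast
  also have "\<dots> = measure lborel ?C * M" using set_integral_const[OF cell_sets fin, of M] by simp
  also have "\<dots> \<le> d * M" using ms assms(4) by (simp add: mult_right_mono)
  finally show ?thesis .
qed



lemma ln_sq_small: fixes u :: real assumes "0 < u" "u \<le> 1" shows "u * (ln u)^2 \<le> 4"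
proof -
  define v where "v = sqrt u"
  have v: "0 < v" "v \<le> 1" "u = v^2" using assms by (auto simp: v_def)
  have "ln (1/v) \<le> 1/v - 1" using v by (intro ln_le_minus_one) auto
  then have h: "- ln v \<le> 1 / v" using v by (simp add: ln_div)
  have "ln v \<le> 0" using v by simp
  have "(ln v)^2 \<le> (1/v)^2" using h \<open>ln v \<le> 0\<close>
    by (metis abs_of_nonpos abs_le_square_iff abs_of_pos  less_eq_real_def v(1) zero_less_divide_1_iff)
  have lu: "ln u = 2 * ln v" using v by (simp add: ln_realpow)
  have "u * (ln u)^2 = 4 * (v^2 * (ln v)^2)" using lu v by (simp add: power2_eq_square)
  also have "\<dots> \<le> 4 * (v^2 * (1/v)^2)"
    using \<open>(ln v)^2 \<le> (1/v)^2\<close> by (intro mult_left_mono) auto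
  also have "\<dots> = 4" using v by (simp add: field_simps)
  finally show ?thesis .
qed

definition KK :: "real \<Rightarrow> real" where "KK M = (4 + M * (ln M)^2) / (ln 2)^2"

lemma KK_nonneg: "M \<ge> 0 \<Longrightarrow> KK M \<ge> 0"
  unfolding KK_def by (intro divide_nonneg_nonneg) auto

lemma phi_bound: assumes "0 \<le> u" "u \<le> M" "1 \<le> M"
  shows "u * (log 2 u)^2 \<le> KK M"
proof (cases "u = 0")
  case True then show ?thesis using KK_nonneg assms by simp
next
  case False
  then have u: "0 < u" using assms by simp
  have "u * (ln u)^2 \<le> 4 + M * (ln M)^2"
  proof (cases "u \<le> 1")
    case True then show ?thesis using ln_sq_small[OF u True] by (smt (verit) mult_nonneg_nonneg zero_le_power2 assms(3))
  next
    case False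
    have "0 \<le> ln u" "ln u \<le> ln M" using False u assms by auto
    then have "(ln u)^2 \<le> (ln M)^2" by (intro power_mono) auto
    then have "u * (ln u)^2 \<le> M * (ln M)^2" using assms u by (intro mult_mono) auto
    then show ?thesis by simp
  qed
  moreover have "u * (log 2 u)^2 = u * (ln u)^2 / (ln 2)^2"
    by (simp add: log_def power_divide)
  ultimately show ?thesis unfolding KK_def by (simp add: divide_right_mono)
qed

lemma var_id:
  fixes p x :: "nat \<Rightarrow> real"
  assumes "(\<Sum>i\<in>S. p i) = 1"
  shows "(\<Sum>i\<in>S. p i * (x i - t)^2) = (\<Sum>i\<in>S. p i * (x i)^2) - 2 * t * (\<Sum>i\<in>S. p i * x i) + t^2"
proof -
  have "(\<Sum>i\<in>S. p i * (x i - t)^2) = (\<Sum>i\<in>S. p i * (x i)^2 - 2 * t * (p i * x i) + t^2 * p i)"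
    by (rule sum.cong) (auto simp: power2_eq_square algebra_simps)
  also have "\<dots> = (\<Sum>i\<in>S. p i * (x i)^2) - 2 * t * (\<Sum>i\<in>S. p i * x i) + t^2 * (\<Sum>i\<in>S. p i)"
    by (simp add: sum.distrib sum_subtractf sum_distrib_left)
  finally show ?thesis using assms by simp
qed

lemma cs:
  fixes p x :: "nat \<Rightarrow> real"
  assumes "(\<Sum>i\<in>S. p i) = 1" "\<And>i. p i \<ge> 0"
  shows "(\<Sum>i\<in>S. p i * x i)^2 \<le> (\<Sum>i\<in>S. p i * (x i)^2)"
proof -
  let ?m = "\<Sum>i\<in>S. p i * x i"
  have "0 \<le> (\<Sum>i\<in>S. p i * (x i - ?m)^2)" using assms(2) by (intro sum_nonneg) auto
  also have "\<dots> = (\<Sum>i\<in>S. p i * (x i)^2) - ?m^2"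
    using var_id[OF assms(1)] by (simp add: power2_eq_square)
  finally show ?thesis by simp
qed

lemma var_le:
  fixes p x :: "nat \<Rightarrow> real"
  assumes "(\<Sum>i\<in>S. p i) = 1"
  shows "(\<Sum>i\<in>S. p i * (x i)^2) - (\<Sum>i\<in>S. p i * x i)^2 \<le> (\<Sum>i\<in>S. p i * (x i - t)^2)"
proof -
  have "0 \<le> ((\<Sum>i\<in>S. p i * x i) - t)^2" by simp
  then show ?thesis using var_id[OF assms, of x t] by (simp add: power2_eq_square algebra_simps)
qed

lemma key:
  fixes p L :: "nat \<Rightarrow> real" and z :: "real \<Rightarrow> real"
  assumes "(\<Sum>i\<in>S. p i) = 1" "\<And>i. p i \<ge> 0" "\<And>i. L i \<ge> 0" "\<And>t. t \<ge> 0 \<Longrightarrow> z t \<ge> 0"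
    and E1: "(\<Sum>i\<in>S. p i * L i) > 0"
  defines "E1 \<equiv> (\<Sum>i\<in>S. p i * L i)" and "E2 \<equiv> (\<Sum>i\<in>S. p i * (L i)^2)"
    and "A \<equiv> (\<Sum>i\<in>S. p i * (L i + z (L i)))" and "B \<equiv> (\<Sum>i\<in>S. p i * (L i + z (L i))^2)"
  shows "E2 / (2 * E1) + E1 - (B / (2 * A) + E1) \<le> (E2 - E1^2) / (2 * E1)"
    and "B / (2 * A) + E1 \<ge> 0"
proof -
  have "E1 \<le> A" unfolding E1_def A_def
    using assms(2,3,4) by (intro sum_mono mult_left_mono) auto
  have e1: "E1 > 0" using E1 E1_def by simp
  have a: "A > 0" using \<open>E1 \<le> A\<close> e1 by simp
  have "A^2 \<le> B" unfolding A_def B_def by (rule cs[OF assms(1,2)])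
  then have "A^2 / (2*A) \<le> B / (2*A)" using a by (intro divide_right_mono) auto
  moreover have "A^2 / (2*A) = A/2" using a by (simp add: power2_eq_square)
  ultimately have b: "E1 / 2 \<le> B / (2*A)" using \<open>E1 \<le> A\<close> by simp
  then show "B / (2 * A) + E1 \<ge> 0" using e1 by simp
  have "E2 / (2 * E1) - E1/2 = (E2 - E1^2) / (2 * E1)" using e1 by (simp add: field_simps power2_eq_square)
  then show "E2 / (2 * E1) + E1 - (B / (2 * A) + E1) \<le> (E2 - E1^2) / (2 * E1)" using b by simp
qed

lemma lim_aux: "((\<lambda>d::real. C / (2 * (- log 2 (d * M)))) \<longlongrightarrow> 0) (at_right 0)" if "M > 0"
  using that by real_asymp



lemma len_nonneg: assumes "0 \<le> p" "p \<le> 1" shows "0 \<le> real_of_int \<lceil>- log 2 p\<rceil>"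
proof (cases "p = 0")
  case True then show ?thesis by (simp add: log_def)
next
  case False
  then have "log 2 p \<le> 0" using assms by (simp add: log_le_zero_cancel_iff)
  then show ?thesis by linarith
qed

lemma len_ge: assumes "0 < p" "p \<le> q" shows "- log 2 q \<le> real_of_int \<lceil>- log 2 p\<rceil>"
proof -
  have "log 2 p \<le> log 2 q" using assms by simp
  then show ?thesis by linarith
qed

lemma term_bound:
  assumes "0 \<le> p" "p \<le> d * M" "0 < d" "1 \<le> M"
  shows "p * (real_of_int \<lceil>- log 2 p\<rceil> - (- log 2 d))^2 \<le> 2 * d * KK M + 2 * p"
proof (cases "p = 0")
  case True then show ?thesis using KK_nonneg[of M] assms by simp
next
  case False
  then have p: "0 < p" using assms by simp
  define y where "y = - log 2 (p / d)"
  have y: "y = - log 2 p + log 2 d" using p assms by (simp add: y_def log_divide)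
  define e where "e = real_of_int \<lceil>- log 2 p\<rceil> - (- log 2 p)"
  have e: "0 \<le> e" "e < 1" unfolding e_def by linarith+
  have "real_of_int \<lceil>- log 2 p\<rceil> - (- log 2 d) = y + e" using y e_def by simp
  moreover have "(y + e)^2 \<le> 2 * y^2 + 2" 
  proof -
    have "0 \<le> (y - e)^2" by simp
    moreover have "(y + e)^2 = 2 * y^2 + 2 * e^2 - (y - e)^2" by (simp add: power2_eq_square algebra_simps)
    ultimately have "(y + e)^2 \<le> 2 * y^2 + 2 * e^2" by linarith
    moreover have "e^2 \<le> 1" using e by (simp add: power_le_one)
    ultimately show ?thesis by simp
  qed
  ultimately have "p * (real_of_int \<lceil>- log 2 p\<rceil> - (- log 2 d))^2 \<le> p * (2 * y^2 + 2)"
    using p by (simp add: mult_left_mono)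
  also have "\<dots> = 2 * (d * ((p/d) * (log 2 (p/d))^2)) + 2 * p"
    using assms(3) by (simp add: y_def algebra_simps)
  also have "\<dots> \<le> 2 * (d * KK M) + 2 * p"
    using phi_bound[of "p/d" M] assms p by (simp add: pos_divide_le_eq mult.commute)
  finally show ?thesis by simp
qed



lemma per_delta:
  fixes f :: "real \<Rightarrow> real"
  assumes ab: "a < b" and fnn: "\<forall>x. 0 \<le> f x" and int: "set_integrable lborel {a..b} f"
    and one: "(LINT x : {a..b} | lborel. f x) = 1"
    and fM: "\<forall>x\<in>{a..b}. f x \<le> M" and M: "1 \<le> M" and d: "0 < d" "d \<le> 1" and dM: "d * M \<le> 1/2"
    and W: "0 \<le> W"
  shows "0 \<le> AoI f a b d (\<lambda>_. 0) - (INF z\<in>policies W. AoI f a b d z) \<and>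
         AoI f a b d (\<lambda>_. 0) - (INF z\<in>policies W. AoI f a b d z) \<le> (2 * KK M * (b - a + 1) + 2) / (2 * (- log 2 (d * M)))"
proof -
  define p where "p = cell_prob f a b d"
  define L where "L = shannon_len f a b d"
  define S where "S = {..<num_cells a b d}"
  have expL: "exp_L f a b d g = (\<Sum>i\<in>S. p i * g (L i))" for g
    unfolding exp_L_def p_def L_def S_def ..
  have sum1: "(\<Sum>i\<in>S. p i) = 1" unfolding S_def p_def using sum_cell_prob[OF d(1) ab int] one by simp
  have pnn: "\<And>i. 0 \<le> p i" unfolding p_def using cell_prob_nonneg fnn by blast
  have ple: "\<And>i. p i \<le> d * M" unfolding p_def using cell_prob_le[OF d(1) int fM] M by simp
  have Leq: "L i = real_of_int \<lceil>- log 2 (p i)\<rceil>" for i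
    by (simp add: L_def shannon_len_def p_def)
  have Lnn: "0 \<le> L i" for i
  proof -
    have "p i \<le> 1" using ple[of i] dM by linarith
    then show ?thesis unfolding Leq using len_nonneg[OF pnn[of i]] by simp
  qed
  define T where "T = - log 2 (d * M)"
  have dMpos: "0 < d * M" using d M by simp
  have T: "0 < T" unfolding T_def using dMpos dM by simp
  define E1 where "E1 = (\<Sum>i\<in>S. p i * L i)"
  define E2 where "E2 = (\<Sum>i\<in>S. p i * (L i)^2)"
  have "(\<Sum>i\<in>S. p i * T) \<le> E1" unfolding E1_def
  proof (rule sum_mono)
    fix i show "p i * T \<le> p i * L i"
    proof (cases "p i = 0")
      case False
      then have "0 < p i" using pnn[of i] by simp
      then have "T \<le> L i" unfolding T_def Leq
        using len_ge ple by blast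
      then show ?thesis using pnn[of i] by (simp add: mult_left_mono)
    qed simp
  qed
  then have E1T: "T \<le> E1" using sum1 by (simp add: sum_distrib_right[symmetric])
  then have E1pos: "0 < E1" using T by simp
  define C where "C = 2 * KK M * (b - a + 1) + 2"
  have Cnn: "0 \<le> C" unfolding C_def using KK_nonneg[of M] M ab by simp
  have V: "E2 - E1^2 \<le> C"
  proof -
    have "E2 - E1^2 \<le> (\<Sum>i\<in>S. p i * (L i - (- log 2 d))^2)"
      unfolding E1_def E2_def by (rule var_le[OF sum1])
    also have "\<dots> \<le> (\<Sum>i\<in>S. 2 * d * KK M + 2 * p i)"
      unfolding Leq by (rule sum_mono, rule term_bound[OF pnn ple d(1) M])
    also have "\<dots> = real (num_cells a b d) * d * 2 * KK M + 2"
      using sum1 by (simp add: sum.distrib sum_distrib_left[symmetric] S_def)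
    also have "\<dots> \<le> (b - a + 1) * 2 * KK M + 2"
    proof -
      have "0 < (b - a) / d" using ab d by simp
      then have c: "0 \<le> \<lceil>(b - a) / d\<rceil>" by linarith
      have "real (num_cells a b d) = of_int \<lceil>(b - a) / d\<rceil>" unfolding num_cells_def using c by simp
      then have "real (num_cells a b d) \<le> (b - a) / d + 1" by linarith
      then have "real (num_cells a b d) * d \<le> ((b - a) / d + 1) * d" using d by (simp add: mult_right_mono)
      also have "\<dots> = b - a + d" using d by (simp add: field_simps)
      finally have "real (num_cells a b d) * d \<le> b - a + 1" using d by simp
      then show ?thesis using KK_nonneg[of M] M by (simp add: mult_right_mono)
    qed
    finally show ?thesis unfolding C_def by (simp add: algebra_simps)
  qed
  have Vnn: "0 \<le> E2 - E1^2" unfolding E1_def E2_def using cs[OF sum1 pnn, of L] by simp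
  define v where "v = (E2 - E1^2) / (2 * E1)"
  have vle: "v \<le> C / (2 * T)" unfolding v_def
    using Cnn V T E1T by (intro frac_le) auto
  have A0: "AoI f a b d (\<lambda>_. 0) = E2 / (2 * E1) + E1"
    unfolding AoI_def expL E1_def E2_def by simp
  have pol: "\<And>z. z \<in> policies W \<Longrightarrow> AoI f a b d (\<lambda>_. 0) - AoI f a b d z \<le> v \<and> 0 \<le> AoI f a b d z"
  proof -
    fix z assume "z \<in> policies W"
    then have z: "\<And>t. 0 \<le> t \<Longrightarrow> 0 \<le> z t" unfolding policies_def by auto
    show "AoI f a b d (\<lambda>_. 0) - AoI f a b d z \<le> v \<and> 0 \<le> AoI f a b d z"
      using key[OF sum1 pnn Lnn z, OF _ E1pos[unfolded E1_def]] unfolding A0 AoI_def expL v_def E1_def E2_def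
      by auto
  qed
  have ne: "policies W \<noteq> {}"
  proof -
    have "(\<lambda>_. 0) \<in> policies W" unfolding policies_def using W by auto
    then show ?thesis by blast
  qed
  have bdd: "bdd_below (AoI f a b d ` policies W)" using pol by (intro bdd_belowI2[of _ 0]) auto
  have "(INF z\<in>policies W. AoI f a b d z) \<le> AoI f a b d (\<lambda>_. 0)"
    by (rule cINF_lower[OF bdd]) (use W in \<open>auto simp: policies_def\<close>)
  moreover have "AoI f a b d (\<lambda>_. 0) - v \<le> (INF z\<in>policies W. AoI f a b d z)"
    by (rule cINF_greatest[OF ne]) (use pol in force)
  ultimately show ?thesis using vle unfolding C_def T_def by linarith
qed

theorem corollary1:
  fixes f :: "real \<Rightarrow> real" and a b W :: real
  assumes "a < b"
    and "\<forall>x. 0 \<le> f x"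
    and "closure {x. f x > 0} = {a..b}"
    and "continuous_on {a..b} f"
    and "f differentiable_on {a..b}"
    and "set_integrable lborel {a..b} f"
    and "(LINT x : {a..b} | lborel. f x) = 1"
    and "set_integrable lborel {a..b} (\<lambda>x. f x * (log 2 (f x))\<^sup>2)"
    and "set_integrable lborel {a..b} (\<lambda>x. f x * log 2 (f x))"
    and "0 \<le> W"
  shows "((\<lambda>\<delta>. AoI f a b \<delta> (\<lambda>_. 0) - (INF z \<in> policies W. AoI f a b \<delta> z))
           \<longlongrightarrow> 0) (at_right 0)"
proof -
  have "compact (f ` {a..b})" by (rule compact_continuous_image[OF assms(4) compact_Icc])
  then obtain B where B: "\<forall>y\<in>f ` {a..b}. norm y \<le> B"
    using compact_imp_bounded bounded_iff by metis
  define M where "M = max 1 B"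
  have M: "1 \<le> M" unfolding M_def by simp
  have fM: "\<forall>x\<in>{a..b}. f x \<le> M" using B unfolding M_def by force
  define C where "C = 2 * KK M * (b - a + 1) + 2"
  let ?g = "\<lambda>\<delta>. AoI f a b \<delta> (\<lambda>_. 0) - (INF z \<in> policies W. AoI f a b \<delta> z)"
  have ev0: "0 \<le> ?g d \<and> ?g d \<le> C / (2 * (- log 2 (d * M)))" if d: "0 < d" "d < 1 / (2 * M)" for d
  proof -
    have dM: "d * M \<le> 1/2" using d M by (simp add: field_simps)
    have "1 / (2 * M) \<le> 1" using M by simp
    then have d1: "d \<le> 1" using d by linarith
    show ?thesis
      unfolding C_def using per_delta[OF assms(1,2,6,7) fM M d(1) d1 dM assms(10)] by blast
  qed
  have ev: "eventually (\<lambda>d. 0 \<le> ?g d \<and> ?g d \<le> C / (2 * (- log 2 (d * M)))) (at_right 0)"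
    unfolding eventually_at_right_field using M ev0 by (intro exI[of _ "1 / (2 * M)"]) auto
  show ?thesis
  proof (rule tendsto_sandwich[of "\<lambda>_. 0" _ _ "\<lambda>d. C / (2 * (- log 2 (d * M)))"])
    show "\<forall>\<^sub>F d in at_right 0. 0 \<le> ?g d" using ev by (rule eventually_mono) blast
    show "\<forall>\<^sub>F d in at_right 0. ?g d \<le> C / (2 * (- log 2 (d * M)))" using ev by (rule eventually_mono) blast
    show "((\<lambda>_. 0) \<longlongrightarrow> (0::real)) (at_right 0)" by simp
    show "((\<lambda>d. C / (2 * (- log 2 (d * M)))) \<longlongrightarrow> 0) (at_right 0)" using lim_aux M by simp
  qed
qed

end
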